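(* Let $r = 2^4 + 2^3 + 2 + 1 = 27$ and $p = 2^{64} \oplus r$. As $x$ ranges over all nonnegative integers of degree less than $128$ (i.e. $x < 2^{128}$), the quantity $\big((z \div 2^{64}) \star 2^{64}\big) \bmod p$, where $z = (x \div 2^{64}) \star r$, takes only $16$ possible values.
   Context: All operations are carry-less. For nonnegative integers $a,b$, with $a_i$ the $i$-th least significant bit of $a$, the carry-less product $a \star b$ is the integer whose $i$-th bit is $\bigoplus_{k=0}^{i} a_{i-k} b_k$; $\oplus$ is bitwise XOR. For a positive integer $x$, $\mathrm{degree}(x)$ is the index (starting at $0$) of its most significant nonzero bit. For integers $a$ and $b \neq 0$ there are unique integers $\alpha,\beta$ with $a = \alpha \star b \oplus \beta$ and $\beta = 0$ or $\mathrm{degree}(\beta) < \mathrm{degree}(b)$; one writes $a \div b = \alpha$ and $a \bmod b = \beta$. Precedence: $\star$, $\bmod$, $\div$ first, then $\oplus$. *)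

theory Defs
  imports Main
begin

text \<open>Carry-less product on nonnegative integers: bit i of clmul a b is the XOR over
k \<le> i of a_(i-k) b_k; computed as XOR of shifted copies of a, one per set bit of b.\<close>
fun clmul :: "nat \<Rightarrow> nat \<Rightarrow> nat" where
  "clmul a b = (if b = 0 then 0
     else xor (if odd b then a else 0) (clmul (2 * a) (b div 2)))"

declare clmul.simps[simp del]

definition degree :: "nat \<Rightarrow> nat" where
  "degree x = (GREATEST i. bit x i)"

definition cldiv :: "nat \<Rightarrow> nat \<Rightarrow> nat" where
  "cldiv a b = (THE \<alpha>. \<exists>\<beta>. a = xor (clmul \<alpha> b) \<beta> \<and> (\<beta> = 0 \<or> degree \<beta> < degree b))"

definition clmod :: "nat \<Rightarrow> nat \<Rightarrow> nat" where
  "clmod a b = (THE \<beta>. \<exists>\<alpha>. a = xor (clmul \<alpha> b) \<beta> \<and> (\<beta> = 0 \<or> degree \<beta> < degree b))"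

end

theory Submission
  imports Defs
begin

lemma xor_disj: "(r::nat) < 2^k \<Longrightarrow> xor (q*2^k) r = q*2^k + r"
proof (induction k arbitrary: r)
  case 0 then show ?case by simp
next
  case (Suc k)
  have "r div 2 < 2^k" using Suc.prems by auto
  then have ih: "xor (q*2^k) (r div 2) = q*2^k + r div 2" by (rule Suc.IH)
  have "xor (q*2^Suc k) r = of_bool (odd (q*2^Suc k) \<noteq> odd r) + 2 * xor (q*2^Suc k div 2) (r div 2)"
    by (rule xor_nat_rec)
  also have "q*2^Suc k div 2 = q*2^k" by simp
  also have "odd (q*2^Suc k) = False" by simp
  finally show ?case using ih by (simp add: algebra_simps)
qed

lemma xor_lt: "(x::nat) < 2^k \<Longrightarrow> y < 2^k \<Longrightarrow> xor x y < 2^k"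
proof (induction k arbitrary: x y)
  case 0 then show ?case by simp
next
  case (Suc k)
  have "xor (x div 2) (y div 2) < 2^k" using Suc by auto
  then show ?case by (subst xor_nat_rec) simp
qed

lemma bit_ge: "bit (x::nat) k \<Longrightarrow> 2^k \<le> x"
  by (metis bit_nat_def div_less even_zero not_le)

lemma bit_top: "2^k \<le> (x::nat) \<Longrightarrow> x < 2^(k+1) \<Longrightarrow> bit x k"
proof -
  assume a: "2^k \<le> x" "x < 2^(k+1)"
  have "x div 2^k < 2" using a by (simp add: div_less_iff_less_mult mult.commute)
  moreover have "1 \<le> x div 2^k" using div_le_mono[OF a(1), of "2^k"] by simp
  ultimately have "x div 2^k = 1" by simp
  then show ?thesis by (simp add: bit_nat_def)
qed

lemma xor_top: "2^k \<le> (x::nat) \<Longrightarrow> x < 2^(k+1) \<Longrightarrow> y < 2^k \<Longrightarrow>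
   2^k \<le> xor x y \<and> xor x y < 2^(k+1)"
proof -
  assume a: "2^k \<le> (x::nat)" "x < 2^(k+1)" "y < 2^k"
  have "y < 2^(k+1)" using a(3) by (simp add: less_trans)
  then have u: "xor x y < 2^(k+1)" using a(2) xor_lt by blast
  have "\<not> bit y k" using a(3) bit_ge not_le by blast
  then have "bit (xor x y) k" using bit_top[OF a(1,2)] by (simp add: bit_xor_iff)
  then show ?thesis using u bit_ge by blast
qed

lemma degree_eq: "2^n \<le> (x::nat) \<Longrightarrow> x < 2^(n+1) \<Longrightarrow> degree x = n"
  unfolding degree_def
proof (rule Greatest_equality)
  assume "2^n \<le> (x::nat)" "x < 2^(n+1)"
  then show "bit x n" by (rule bit_top)
next
  fix y assume a: "2^n \<le> (x::nat)" "x < 2^(n+1)" "bit x y"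
  show "y \<le> n"
  proof (rule ccontr)
    assume "\<not> y \<le> n"
    then have "(2::nat)^(n+1) \<le> 2^y" by (intro power_increasing) auto
    then show False using a bit_ge by fastforce
  qed
qed

lemma ex_top: "0 < (x::nat) \<Longrightarrow> \<exists>n. 2^n \<le> x \<and> x < 2^(n+1)"
proof (induction x rule: less_induct)
  case (less x)
  show ?case
  proof (cases "x = 1")
    case True then show ?thesis by (intro exI[of _ 0]) simp
  next
    case False
    then have "0 < x div 2" "x div 2 < x" using less.prems by auto
    then obtain n where "2^n \<le> x div 2" "x div 2 < 2^(n+1)" using less.IH by blast
    then show ?thesis by (intro exI[of _ "n+1"]) auto
  qed
qed

lemma degree_less: "0 < (x::nat) \<Longrightarrow> x < 2^n \<Longrightarrow> degree x < n"
proof -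
  assume a: "0 < x" "x < 2^n"
  obtain m where m: "2^m \<le> x" "x < 2^(m+1)" using ex_top[OF a(1)] by blast
  then have "(2::nat)^m < 2^n" using a by linarith
  then have "m < n" using power_less_imp_less_exp by fastforce
  then show ?thesis using degree_eq[OF m] by simp
qed

lemma degree_less_iff: "0 < (x::nat) \<Longrightarrow> degree x < n \<Longrightarrow> x < 2^n"
proof -
  assume a: "0 < x" "degree x < n"
  obtain m where m: "2^m \<le> x" "x < 2^(m+1)" using ex_top[OF a(1)] by blast
  then have "m+1 \<le> n" using degree_eq[OF m] a by simp
  then have "(2::nat)^(m+1) \<le> 2^n" by (intro power_increasing) auto
  then show ?thesis using m by simp
qed

lemma clmul_0_left[simp]: "clmul 0 b = 0"
  by (induction b rule: less_induct) (subst clmul.simps, simp)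

lemma clmul_0_right[simp]: "clmul a 0 = 0"
  by (subst clmul.simps) simp

lemma clmul_xor_left: "clmul (xor a a') b = xor (clmul a b) (clmul a' b)"
proof (induction a b arbitrary: a' rule: clmul.induct)
  case (1 a b)
  show ?case
  proof (cases "b = 0")
    case True then show ?thesis by simp
  next
    case False
    have "2 * xor a a' = xor (2*a) (2*a')"
      by (metis push_bit_nat_def push_bit_xor mult.commute power_one_right)
    then show ?thesis using 1[OF False, of "2*a'"] False
      apply (subst (1 2 3) clmul.simps)
      by (simp add: ac_simps)
  qed
qed

lemma xor_2: "xor (2*a) (2*b) = 2 * xor a (b::nat)"
  by (metis push_bit_nat_def push_bit_xor mult.commute power_one_right)

lemma clmul_mult2: "clmul (2*a) b = 2 * clmul a b"
proof (induction a b rule: clmul.induct)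
  case (1 a b)
  show ?case
  proof (cases "b = 0")
    case True then show ?thesis by simp
  next
    case False
    have e: "(if odd b then 2*a else 0) = 2 * (if odd b then a else 0)" by simp
    show ?thesis using 1[OF False] False
      apply (subst (1 2) clmul.simps)
      by (simp only: e xor_2 if_False)
  qed
qed

lemma clmul_mult_pow: "clmul (a*2^k) b = clmul a b * 2^k"
proof (induction k arbitrary: a)
  case 0 then show ?case by simp
next
  case (Suc k)
  have "a*2^Suc k = (2*a)*2^k" by simp
  then show ?case using Suc.IH[of "2*a"] clmul_mult2[of a b] by (simp add: ac_simps)
qed

lemma clmul_pow2: "clmul a (2^k) = a*2^k"
proof (induction k arbitrary: a)
  case 0 then show ?case by (subst clmul.simps) simp
next
  case (Suc k)
  then show ?case by (subst clmul.simps) simp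
qed

lemma clmul_1[simp]: "clmul a 1 = a"
  using clmul_pow2[of a 0] by simp

lemma clmul_Suc0[simp]: "clmul a (Suc 0) = a"
  using clmul_1 by simp

lemma clmul_bound: "a < 2^m \<Longrightarrow> b < 2^n \<Longrightarrow> 0 < n \<Longrightarrow> clmul a b < 2^(m+n-1)"
proof (induction a b arbitrary: m n rule: clmul.induct)
  case (1 a b)
  show ?case
  proof (cases "b = 0")
    case True then show ?thesis by simp
  next
    case False
    have c: "(if odd b then a else 0) < 2^(m+n-1)"
    proof -
      have p: "(2::nat)^m \<le> 2^(m+n-1)" using 1(4) by (intro power_increasing) auto
      show ?thesis using order.strict_trans2[OF 1(2) p] by simp
    qed
    have r: "clmul (2*a) (b div 2) < 2^(m+n-1)"
    proof (cases "n = 1")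
      case True
      then have "b div 2 = 0" using 1(3) by simp
      then show ?thesis by simp
    next
      case n: False
      obtain n' where n': "n = Suc n'" using 1(4) by (cases n) auto
      have bd: "b div 2 < 2^n'" using 1(3) n' by (simp add: less_mult_imp_div_less)
      have "clmul (2*a) (b div 2) < 2^((m+1)+(n-1)-1)"
        by (rule 1(1)[OF False]) (use 1(2,3,4) n n' bd in auto)
      then show ?thesis using n 1(4) by simp
    qed
    show ?thesis using False xor_lt[OF c r] by (subst clmul.simps) simp
  qed
qed

lemma clmul_top: "2^m \<le> a \<Longrightarrow> a < 2^(m+1) \<Longrightarrow> 2^n \<le> b \<Longrightarrow> b < 2^(n+1) \<Longrightarrow>
   2^(m+n) \<le> clmul a b \<and> clmul a b < 2^(m+n+1)"
proof (induction a b arbitrary: m n rule: clmul.induct)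
  case (1 a b)
  have b0: "b \<noteq> 0" using 1(4) by (metis not_less0 power_eq_0_iff zero_neq_numeral gr_zeroI le_0_eq)
  show ?case
  proof (cases "n = 0")
    case True
    then have "b = 1" using 1(4,5) by simp
    then show ?thesis using 1(2,3) True by simp
  next
    case n: False
    obtain n' where n': "n = Suc n'" using n by (cases n) auto
    have d1: "2^n' \<le> b div 2" using div_le_mono[OF 1(4), of 2] n' by simp
    have d2: "b div 2 < 2^(n'+1)" using 1(5) n' by (simp add: less_mult_imp_div_less)
    have ih: "2^((m+1)+(n-1)) \<le> clmul (2*a) (b div 2) \<and> clmul (2*a) (b div 2) < 2^((m+1)+(n-1)+1)"
      by (rule 1(1)[OF b0]) (use 1(2-5) n' d1 d2 in auto)
    have e: "(m+1)+(n-1) = m+n" using n by simp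
    have c: "(if odd b then a else 0) < 2^(m+n)"
    proof -
      have p: "(2::nat)^(m+1) \<le> 2^(m+n)" using n by (intro power_increasing) auto
      show ?thesis using order.strict_trans2[OF 1(3) p] by simp
    qed
    have "2^(m+n) \<le> xor (clmul (2*a) (b div 2)) (if odd b then a else 0) \<and>
          xor (clmul (2*a) (b div 2)) (if odd b then a else 0) < 2^(m+n+1)"
      by (rule xor_top) (use ih e c in auto)
    then show ?thesis using b0 by (simp add: clmul.simps[of a b] xor.commute)
  qed
qed

lemma clmul_split: "s < 2^k \<Longrightarrow> clmul a (q*2^k + s) = xor (clmul a s) (clmul (a*2^k) q)"
proof (induction k arbitrary: a s)
  case 0 then show ?case by simp
next
  case (Suc k)
  show ?case
  proof (cases "q*2^Suc k + s = 0")
    case True then show ?thesis by simp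
  next
    case False
    have sd: "s div 2 < 2^k" using Suc.prems by auto
    have d: "(q*2^Suc k + s) div 2 = q*2^k + s div 2" by simp
    have o: "odd (q*2^Suc k + s) = odd s" by simp
    have "clmul a (q*2^Suc k + s) = xor (if odd s then a else 0) (clmul (2*a) (q*2^k + s div 2))"
      using False by (subst clmul.simps) (simp only: d o if_False)
    also have "\<dots> = xor (if odd s then a else 0) (xor (clmul (2*a) (s div 2)) (clmul (2*a*2^k) q))"
      using Suc.IH[OF sd] by simp
    also have "clmul a s = xor (if odd s then a else 0) (clmul (2*a) (s div 2))"
      by (cases "s = 0") (simp, subst clmul.simps, simp)
    ultimately show ?thesis by (simp add: xor.assoc ac_simps)
  qed
qed

lemma xor_cancel: "xor (xor (x::nat) y) y = x"
  by (simp add: xor.assoc)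

lemma xor_self_left[simp]: "xor (a::nat) (xor a y) = y"
  by (simp add: xor.assoc[symmetric])

lemma cl_unique:
  assumes b0: "b \<noteq> 0"
    and e: "xor (clmul \<alpha> b) \<beta> = xor (clmul \<alpha>' b) \<beta>'"
    and c1: "\<beta> = 0 \<or> degree \<beta> < degree b"
    and c2: "\<beta>' = 0 \<or> degree \<beta>' < degree b"
  shows "\<alpha> = \<alpha>' \<and> \<beta> = \<beta>'"
proof -
  obtain nb where nb: "2^nb \<le> b" "b < 2^(nb+1)" using ex_top b0 by blast
  have db: "degree b = nb" using degree_eq[OF nb] .
  have l1: "\<beta> < 2^nb" using c1 db degree_less_iff by (cases "\<beta> = 0") auto
  have l2: "\<beta>' < 2^nb" using c2 db degree_less_iff by (cases "\<beta>' = 0") auto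
  have x: "clmul (xor \<alpha> \<alpha>') b = xor \<beta> \<beta>'"
  proof -
    have "xor (clmul \<alpha> b) (clmul \<alpha>' b) = xor \<beta> \<beta>'"
      using arg_cong[OF e, of "\<lambda>u. xor (xor u \<beta>) (clmul \<alpha>' b)"]
      by (simp add: xor.assoc xor.left_commute xor.commute)
    then show ?thesis by (simp add: clmul_xor_left)
  qed
  have "xor \<alpha> \<alpha>' = 0"
  proof (rule ccontr)
    assume "xor \<alpha> \<alpha>' \<noteq> 0"
    then obtain m where m: "2^m \<le> xor \<alpha> \<alpha>'" "xor \<alpha> \<alpha>' < 2^(m+1)" using ex_top by blast
    have "2^(m+nb) \<le> clmul (xor \<alpha> \<alpha>') b" using clmul_top[OF m nb] by simp
    moreover have "(2::nat)^nb \<le> 2^(m+nb)" by (intro power_increasing) auto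
    moreover have "xor \<beta> \<beta>' < 2^nb" using xor_lt l1 l2 by blast
    ultimately show False using x by simp
  qed
  then have "\<alpha> = \<alpha>'" by (metis xor_self_left xor.right_neutral)
  then show ?thesis using e by (metis xor_self_left)
qed

lemma cl_divmod:
  assumes "b \<noteq> 0" "a = xor (clmul \<alpha> b) \<beta>" "\<beta> = 0 \<or> degree \<beta> < degree b"
  shows "cldiv a b = \<alpha> \<and> clmod a b = \<beta>"
proof
  show "cldiv a b = \<alpha>" unfolding cldiv_def
    by (rule the_equality) (use assms cl_unique in blast)+
  show "clmod a b = \<beta>" unfolding clmod_def
    by (rule the_equality) (use assms cl_unique in blast)+
qed

lemma cldiv_pow: "cldiv x (2^k) = x div 2^k"
proof -
  have "x = xor (clmul (x div 2^k) (2^k)) (x mod 2^k)"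
    by (simp add: clmul_pow2 xor_disj div_mult_mod_eq)
  moreover have "x mod 2^k = 0 \<or> degree (x mod 2^k) < degree (2^k)"
    using degree_eq[of k "2^k"] degree_less[of "x mod 2^k" k] by auto
  ultimately show ?thesis using cl_divmod[of "2^k" x "x div 2^k" "x mod 2^k"] by simp
qed

definition hh :: "nat \<Rightarrow> nat" where "hh t = clmul (clmul t 27 div 16) 27"

lemma card_hh: "card (hh ` {..<16}) = 16"
  by (simp add: hh_def lessThan_nat_numeral clmul.simps)

lemma split_pow: "(c::nat) * 2^k = (c div 2^j) * 2^(j+k) + (c mod 2^j) * 2^k"
proof -
  have "c * 2^k = (c div 2^j * 2^j + c mod 2^j) * 2^k" by (simp only: div_mult_mod_eq)
  also have "\<dots> = (c div 2^j) * 2^(j+k) + (c mod 2^j) * 2^k" by (simp only: distrib_right power_add mult.assoc)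
  finally show ?thesis .
qed

lemma zdiv:
  assumes a: "a < 2^64"
  shows "clmul a 27 div 2^64 = clmul (a div 2^60) 27 div 16"
proof -
  define t where "t = a div 2^60"
  define s where "s = a mod 2^60"
  have t16: "t < 2^4" using a unfolding t_def by (simp add: less_mult_imp_div_less)
  have s60: "s < 2^60" unfolding s_def by simp
  have "a = xor (t*2^60) s" unfolding t_def s_def using xor_disj[of "a mod 2^60" 60 "a div 2^60"] by (simp add: div_mult_mod_eq)
  then have z: "clmul a 27 = xor (clmul t 27 * 2^60) (clmul s 27)"
    using clmul_mult_pow[of t 60 27] by (simp add: clmul_xor_left)
  define c where "c = clmul t 27"
  have c8: "c < 2^8" unfolding c_def using clmul_bound[OF t16, of 27 5] by simp
  have "c * 2^60 = (c div 16) * 2^64 + (c mod 16) * 2^60"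
    using split_pow[of c 60 4] by simp
  also have "\<dots> = xor ((c div 16) * 2^64) ((c mod 16) * 2^60)"
    by (rule xor_disj[symmetric]) simp
  finally have ce: "c * 2^60 = xor ((c div 16) * 2^64) ((c mod 16) * 2^60)" .
  have u: "(c mod 16) * 2^60 < (2::nat)^64" by simp
  have v: "clmul s 27 < 2^64" using clmul_bound[OF s60, of 27 5] by simp
  have w: "xor ((c mod 16) * 2^60) (clmul s 27) < 2^64" using xor_lt[OF u v] .
  have "clmul a 27 = xor ((c div 16) * 2^64) (xor ((c mod 16) * 2^60) (clmul s 27))"
    using z ce unfolding c_def by (simp add: xor.assoc)
  also have "\<dots> = (c div 16) * 2^64 + xor ((c mod 16) * 2^60) (clmul s 27)"
    by (rule xor_disj[OF w])
  finally have "clmul a 27 div 2^64 = c div 16" using w by simp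
  then show ?thesis unfolding c_def t_def .
qed

lemma modp:
  assumes w: "w < 16" and p: "p = xor (2^64) 27"
  shows "clmod (clmul w (2^64)) p = clmul w 27"
proof -
  have pe: "p = 1 * 2^64 + 27" using p by simp
  have w4: "w < 2^4" using w by simp
  have b: "clmul w 27 < 2^8" using clmul_bound[OF w4, of 27 5] by simp
  have "clmul w p = xor (clmul w 27) (w * 2^64)"
    unfolding pe by (subst clmul_split) (simp_all add: clmul_pow2)
  then have e: "clmul w (2^64) = xor (clmul w p) (clmul w 27)"
    unfolding clmul_pow2[of w 64] by (metis xor_self_left xor.commute)
  have dp: "degree p = 64" using degree_eq[of 64 p] pe by simp
  have "clmul w 27 = 0 \<or> degree (clmul w 27) < degree p"
    using degree_less[of "clmul w 27" 8] b dp by (cases "clmul w 27 = 0") auto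
  then show ?thesis using cl_divmod[of p _ w "clmul w 27"] e pe by simp
qed

lemma value_eq:
  assumes x: "x < 2^128" and p: "p = xor (2^64) 27"
  shows "clmod (clmul (cldiv (clmul (cldiv x (2^64)) 27) (2^64)) (2^64)) p = hh (x div 2^124)"
proof -
  have a: "x div 2^64 < 2^64" using x by (simp add: less_mult_imp_div_less)
  have d: "x div 2^64 div 2^60 = x div 2^124" by (simp add: div_mult2_eq power_add[symmetric])
  have c8: "clmul (x div 2^124) 27 < 2^8" 
    using clmul_bound[of "x div 2^124" 4 27 5] x by (simp add: less_mult_imp_div_less)
  have w: "clmul (x div 2^124) 27 div 16 < 16" using c8 by simp
  show ?thesis
    unfolding cldiv_pow zdiv[OF a] d hh_def using modp[OF w p] by simp
qed

theorem lemma7: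
  fixes r p :: nat
  assumes "r = 2^4 + 2^3 + 2 + 1"
    and "p = xor (2^64) r"
  shows "card {clmod (clmul (cldiv z (2^64)) (2^64)) p | z x :: nat.
                 x < 2^128 \<and> z = clmul (cldiv x (2^64)) r} = 16"
proof -
  have r: "r = 27" using assms(1) by simp
  have p: "p = xor (2^64) 27" using assms(2) r by simp
  have "{clmod (clmul (cldiv z (2^64)) (2^64)) p | z x :: nat.
                 x < 2^128 \<and> z = clmul (cldiv x (2^64)) r} = hh ` {..<16}"
  proof (intro equalityI subsetI)
    fix v assume "v \<in> {clmod (clmul (cldiv z (2^64)) (2^64)) p | z x :: nat.
                 x < 2^128 \<and> z = clmul (cldiv x (2^64)) r}"
    then obtain x where x: "x < 2^128" and v: "v = clmod (clmul (cldiv (clmul (cldiv x (2^64)) 27) (2^64)) (2^64)) p"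
      using r by blast
    have "x div 2^124 < 16" using x by (simp add: less_mult_imp_div_less)
    then show "v \<in> hh ` {..<16}" using value_eq[OF x p] v by auto
  next
    fix v assume "v \<in> hh ` {..<16}"
    then obtain t where t: "t < 16" and v: "v = hh t" by auto
    have x: "t * 2^124 < (2::nat)^128" using t by simp
    have "(t * 2^124) div 2^124 = t" by simp
    then have "v = clmod (clmul (cldiv (clmul (cldiv (t*2^124) (2^64)) 27) (2^64)) (2^64)) p"
      using value_eq[OF x p] v by simp
    then show "v \<in> {clmod (clmul (cldiv z (2^64)) (2^64)) p | z x :: nat.
                 x < 2^128 \<and> z = clmul (cldiv x (2^64)) r}"
      using x r by blast
  qed
  then show ?thesis using card_hh by simp
qed

end
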